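(* Let $J$ be a set and let $L_1,L_2$ be symmetric lists with values in $J$. (1) If there is a morphism $L_1\to L_2$ in $\mathrm{SList}(J)$, then $L_2$ is linear if and only if $L_1$ is linear. (2) If $L_1$ or $L_2$ is linear, there is at most one morphism $L_1\to L_2$ in $\mathrm{SList}(J)$.
   Context: $\mathrm{SList}(J)$ is the category of symmetric lists on $J$: objects are finite lists of elements of $J$; morphisms are generated by $\mathrm{sw}_{a,b,l}:a::b::l\to b::a::l$ (for $a,b\in J$, lists $l$) and $x::_mf:x::l\to x::l'$ (for $f:l\to l'$, $x\in J$), subject to: functoriality of $x::_m-$, naturality of $\mathrm{sw}_{a,b,l}$ in $l$, $\mathrm{sw}_{b,a,l}\circ\mathrm{sw}_{a,b,l}=\mathrm{Id}$, and $\mathrm{sw}_{b,c,a::l}\circ(b::_m\mathrm{sw}_{a,c,l})\circ\mathrm{sw}_{a,b,c::l}=(c::_m\mathrm{sw}_{a,b,l})\circ\mathrm{sw}_{a,c,b::l}\circ(a::_m\mathrm{sw}_{b,c,l})$. A symmetric list is linear if its underlying list has no duplicate entries. *)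

theory Defs
  imports Main
begin

text \<open>Formal expressions built from the generators of SList(J).
  MComp g f denotes g composed after f.\<close>
datatype 'j mexp =
    MId "'j list"
  | MSw 'j 'j "'j list"
  | MCons 'j "'j mexp"
  | MComp "'j mexp" "'j mexp"

inductive mtyped :: "'j mexp \<Rightarrow> 'j list \<Rightarrow> 'j list \<Rightarrow> bool" where
  ty_id: "mtyped (MId l) l l"
| ty_sw: "mtyped (MSw a b l) (a # b # l) (b # a # l)"
| ty_cons: "mtyped f l l' \<Longrightarrow> mtyped (MCons x f) (x # l) (x # l')"
| ty_comp: "mtyped f l1 l2 \<Longrightarrow> mtyped g l2 l3 \<Longrightarrow> mtyped (MComp g f) l1 l3"

inductive meq :: "'j list \<Rightarrow> 'j list \<Rightarrow> 'j mexp \<Rightarrow> 'j mexp \<Rightarrow> bool" where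
  eq_refl: "mtyped f l l' \<Longrightarrow> meq l l' f f"
| eq_sym: "meq l l' f g \<Longrightarrow> meq l l' g f"
| eq_trans: "meq l l' f g \<Longrightarrow> meq l l' g h \<Longrightarrow> meq l l' f h"
| eq_comp: "meq l1 l2 f f' \<Longrightarrow> meq l2 l3 g g' \<Longrightarrow> meq l1 l3 (MComp g f) (MComp g' f')"
| eq_cons: "meq l l' f f' \<Longrightarrow> meq (x # l) (x # l') (MCons x f) (MCons x f')"
| eq_idl: "mtyped f l l' \<Longrightarrow> meq l l' (MComp (MId l') f) f"
| eq_idr: "mtyped f l l' \<Longrightarrow> meq l l' (MComp f (MId l)) f"
| eq_assoc: "mtyped f l1 l2 \<Longrightarrow> mtyped g l2 l3 \<Longrightarrow> mtyped h l3 l4 \<Longrightarrow>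
      meq l1 l4 (MComp h (MComp g f)) (MComp (MComp h g) f)"
| eq_cons_id: "meq (x # l) (x # l) (MCons x (MId l)) (MId (x # l))"
| eq_cons_comp: "mtyped f l1 l2 \<Longrightarrow> mtyped g l2 l3 \<Longrightarrow>
      meq (x # l1) (x # l3) (MCons x (MComp g f)) (MComp (MCons x g) (MCons x f))"
| eq_nat: "mtyped f l l' \<Longrightarrow>
      meq (a # b # l) (b # a # l')
        (MComp (MCons b (MCons a f)) (MSw a b l)) (MComp (MSw a b l') (MCons a (MCons b f)))"
| eq_inv: "meq (a # b # l) (a # b # l) (MComp (MSw b a l) (MSw a b l)) (MId (a # b # l))"
| eq_ybe: "meq (a # b # c # l) (c # b # a # l)
      (MComp (MSw b c (a # l)) (MComp (MCons b (MSw a c l)) (MSw a b (c # l))))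
      (MComp (MCons c (MSw a b l)) (MComp (MSw a c (b # l)) (MCons a (MSw b c l))))"

definition linear_slist :: "'j list \<Rightarrow> bool" where
  "linear_slist L \<longleftrightarrow> distinct L"

end

theory Submission
  imports Defs "HOL-Library.Multiset"
begin

fun src :: "'j mexp \<Rightarrow> 'j list" where
  "src (MId l) = l"
| "src (MSw a b l) = a # b # l"
| "src (MCons x f) = x # src f"
| "src (MComp g f) = src f"

fun tgt :: "'j mexp \<Rightarrow> 'j list" where
  "tgt (MId l) = l"
| "tgt (MSw a b l) = b # a # l"
| "tgt (MCons x f) = x # tgt f"
| "tgt (MComp g f) = tgt g"

fun wt :: "'j mexp \<Rightarrow> bool" where
  "wt (MId l) = True"
| "wt (MSw a b l) = True"
| "wt (MCons x f) = wt f"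
| "wt (MComp g f) = (wt f \<and> wt g \<and> tgt f = src g)"

lemma typed_iff: "mtyped f l l' \<longleftrightarrow> wt f \<and> src f = l \<and> tgt f = l'"
proof
  show "mtyped f l l' \<Longrightarrow> wt f \<and> src f = l \<and> tgt f = l'"
    by (induction rule: mtyped.induct) auto
next
  show "wt f \<and> src f = l \<and> tgt f = l' \<Longrightarrow> mtyped f l l'"
    by (induction f arbitrary: l l') (auto intro: mtyped.intros)
qed

lemma meq_typed: "meq l l' f g \<Longrightarrow> mtyped f l l' \<and> mtyped g l l'"
  by (induction rule: meq.induct) (auto intro: mtyped.intros)

lemma mtyped_mset: "mtyped f l l' \<Longrightarrow> mset l = mset l'"
  by (induction rule: mtyped.induct) auto

definition eqv :: "'j mexp \<Rightarrow> 'j mexp \<Rightarrow> bool" where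
  "eqv f g \<longleftrightarrow> meq (src f) (tgt f) f g"

lemma eqv_D: "eqv f g \<Longrightarrow> wt f \<and> wt g \<and> src g = src f \<and> tgt g = tgt f"
  unfolding eqv_def using meq_typed typed_iff by metis

lemma meq_eqv: "meq l l' f g \<Longrightarrow> eqv f g"
  unfolding eqv_def using meq_typed typed_iff by metis

lemma eqv_meq: "eqv f g \<Longrightarrow> src f = l \<Longrightarrow> tgt f = l' \<Longrightarrow> meq l l' f g"
  unfolding eqv_def by simp

lemma eqv_refl: "wt f \<Longrightarrow> eqv f f"
  by (rule meq_eqv, rule eq_refl) (simp add: typed_iff)

lemma eqv_sym: "eqv f g \<Longrightarrow> eqv g f"
  using eqv_D by (metis eqv_def eq_sym)

lemma eqv_trans[trans]: "eqv f g \<Longrightarrow> eqv g h \<Longrightarrow> eqv f h"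
  using eqv_D by (metis eqv_def eq_trans)

lemma eqv_comp: "eqv f f' \<Longrightarrow> eqv g g' \<Longrightarrow> tgt f = src g \<Longrightarrow> eqv (MComp g f) (MComp g' f')"
  apply (rule meq_eqv[of "src f" "tgt g"])
  apply (rule eq_comp[of _ "tgt f"])
  using eqv_meq by auto

lemma eqv_compL: "eqv g g' \<Longrightarrow> wt f \<Longrightarrow> tgt f = src g \<Longrightarrow> eqv (MComp g f) (MComp g' f)"
  using eqv_comp eqv_refl by blast

lemma eqv_compR: "eqv f f' \<Longrightarrow> wt g \<Longrightarrow> tgt f = src g \<Longrightarrow> eqv (MComp g f) (MComp g f')"
  using eqv_comp eqv_refl by blast

lemma eqv_cons: "eqv f f' \<Longrightarrow> eqv (MCons x f) (MCons x f')"
  apply (rule meq_eqv[of "x # src f" "x # tgt f"])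
  apply (rule eq_cons)
  using eqv_meq by auto

lemma eqv_idl: "wt f \<Longrightarrow> tgt f = l \<Longrightarrow> eqv (MComp (MId l) f) f"
  by (rule meq_eqv, rule eq_idl) (simp add: typed_iff)

lemma eqv_idr: "wt f \<Longrightarrow> src f = l \<Longrightarrow> eqv (MComp f (MId l)) f"
  by (rule meq_eqv, rule eq_idr) (simp add: typed_iff)

lemma eqv_assoc: "wt f \<Longrightarrow> wt g \<Longrightarrow> wt h \<Longrightarrow> tgt f = src g \<Longrightarrow> tgt g = src h \<Longrightarrow>
   eqv (MComp h (MComp g f)) (MComp (MComp h g) f)"
  by (rule meq_eqv, rule eq_assoc) (simp_all add: typed_iff)

lemma eqv_cons_id: "eqv (MCons x (MId l)) (MId (x # l))"
  by (rule meq_eqv, rule eq_cons_id)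

lemma eqv_cons_comp: "wt f \<Longrightarrow> wt g \<Longrightarrow> tgt f = src g \<Longrightarrow>
   eqv (MCons x (MComp g f)) (MComp (MCons x g) (MCons x f))"
  by (rule meq_eqv, rule eq_cons_comp) (simp_all add: typed_iff)

lemma eqv_nat: "wt f \<Longrightarrow> eqv (MComp (MCons b (MCons a f)) (MSw a b (src f)))
    (MComp (MSw a b (tgt f)) (MCons a (MCons b f)))"
  by (rule meq_eqv, rule eq_nat) (simp_all add: typed_iff)

lemma eqv_inv: "eqv (MComp (MSw b a l) (MSw a b l)) (MId (a # b # l))"
  by (rule meq_eqv, rule eq_inv)

lemma eqv_ybe: "eqv (MComp (MSw b c (a # l)) (MComp (MCons b (MSw a c l)) (MSw a b (c # l))))
      (MComp (MCons c (MSw a b l)) (MComp (MSw a c (b # l)) (MCons a (MSw b c l))))"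
  by (rule meq_eqv, rule eq_ybe)

fun swl :: "nat \<Rightarrow> 'j list \<Rightarrow> 'j list" where
  "swl 0 (a # b # r) = b # a # r"
| "swl (Suc k) (x # r) = x # swl k r"
| "swl _ l = l"

fun sw_at :: "nat \<Rightarrow> 'j list \<Rightarrow> 'j mexp" where
  "sw_at 0 (a # b # r) = MSw a b r"
| "sw_at (Suc k) (x # r) = MCons x (sw_at k r)"
| "sw_at _ l = MId l"

fun acts :: "nat list \<Rightarrow> 'j list \<Rightarrow> 'j list" where
  "acts [] l = l"
| "acts (k # w) l = acts w (swl k l)"

fun build :: "'j list \<Rightarrow> nat list \<Rightarrow> 'j mexp" where
  "build l [] = MId l"
| "build l (k # w) = MComp (build (swl k l) w) (sw_at k l)"

fun nf :: "'j mexp \<Rightarrow> nat list" where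
  "nf (MId l) = []"
| "nf (MSw a b l) = [0]"
| "nf (MCons x f) = map Suc (nf f)"
| "nf (MComp g f) = nf f @ nf g"

lemma sw_at_props[simp]: "wt (sw_at k l) \<and> src (sw_at k l) = l \<and> tgt (sw_at k l) = swl k l"
  by (induction k l rule: sw_at.induct) auto

lemma swl_len[simp]: "length (swl k l) = length l"
  by (induction k l rule: swl.induct) auto

lemma swl_mset[simp]: "mset (swl k l) = mset l"
  by (induction k l rule: swl.induct) auto

lemma acts_len[simp]: "length (acts w l) = length l"
  by (induction w arbitrary: l) auto

lemma acts_mset[simp]: "mset (acts w l) = mset l"
  by (induction w arbitrary: l) auto

lemma build_props[simp]: "wt (build l w) \<and> src (build l w) = l \<and> tgt (build l w) = acts w l"
  by (induction w arbitrary: l) auto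

lemma build_append: "eqv (build l (u @ v)) (MComp (build (acts u l) v) (build l u))"
proof (induction u arbitrary: l)
  case Nil
  then show ?case by (simp add: eqv_sym eqv_idr)
next
  case (Cons k u)
  have "eqv (build l ((k # u) @ v))
     (MComp (MComp (build (acts u (swl k l)) v) (build (swl k l) u)) (sw_at k l))"
    using Cons.IH by (simp add: eqv_compL)
  also have "eqv \<dots> (MComp (build (acts u (swl k l)) v) (MComp (build (swl k l) u) (sw_at k l)))"
    by (rule eqv_sym, rule eqv_assoc) auto
  finally show ?case by simp
qed

lemma build_Suc: "eqv (build (x # l) (map Suc w)) (MCons x (build l w))"
proof (induction w arbitrary: l)
  case Nil
  then show ?case by (simp add: eqv_sym eqv_cons_id)
next
  case (Cons k w)
  have "eqv (build (x # l) (map Suc (k # w)))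
      (MComp (MCons x (build (swl k l) w)) (MCons x (sw_at k l)))"
    using Cons.IH by (simp add: eqv_compL)
  also have "eqv \<dots> (MCons x (build l (k # w)))"
    by (simp add: eqv_sym eqv_cons_comp)
  finally show ?case .
qed

lemma nf_eqv: "wt f \<Longrightarrow> eqv f (build (src f) (nf f))"
proof (induction f)
  case (MId l)
  then show ?case by (simp add: eqv_refl)
next
  case (MSw a b l)
  then show ?case by (simp add: eqv_sym eqv_idl)
next
  case (MCons x f)
  then show ?case using eqv_cons build_Suc eqv_sym eqv_trans by fastforce
next
  case (MComp g f)
  then have h: "wt f" "wt g" "tgt f = src g" by auto
  have ff: "eqv f (build (src f) (nf f))" using MComp h by auto
  have gg: "eqv g (build (src g) (nf g))" using MComp h by auto
  have a: "acts (nf f) (src f) = src g" using eqv_D[OF ff] h by simp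
  have "eqv (MComp g f) (MComp (build (src g) (nf g)) (build (src f) (nf f)))"
    using eqv_comp[OF ff gg] h by simp
  also have "eqv \<dots> (build (src f) (nf f @ nf g))"
    using build_append[of "src f" "nf f" "nf g"] a by (simp add: eqv_sym)
  finally show ?case by simp
qed

definition weq :: "'j itself \<Rightarrow> nat \<Rightarrow> nat list \<Rightarrow> nat list \<Rightarrow> bool" where
  "weq T n u v \<longleftrightarrow> (\<forall>(l::'j list). length l = n \<longrightarrow> eqv (build l u) (build l v))"

lemma weq_refl: "weq TYPE('j) n u u"
  unfolding weq_def by (simp add: eqv_refl)

lemma weq_sym: "weq TYPE('j) n u v \<Longrightarrow> weq TYPE('j) n v u"
  unfolding weq_def by (simp add: eqv_sym)

lemma weq_trans[trans]: "weq TYPE('j) n u v \<Longrightarrow> weq TYPE('j) n v w \<Longrightarrow> weq TYPE('j) n u w"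
  unfolding weq_def by (metis eqv_trans)

lemma weq_app: "weq TYPE('j) n u u' \<Longrightarrow> weq TYPE('j) n v v' \<Longrightarrow> weq TYPE('j) n (u @ v) (u' @ v')"
  unfolding weq_def
proof (intro allI impI)
  fix l :: "'j list"
  assume u: "\<forall>(l::'j list). length l = n \<longrightarrow> eqv (build l u) (build l u')"
    and v: "\<forall>(l::'j list). length l = n \<longrightarrow> eqv (build l v) (build l v')"
    and l: "length l = n"
  have uu: "eqv (build l u) (build l u')" using u l by auto
  have a: "acts u' l = acts u l" using eqv_D[OF uu] by simp
  have vv: "eqv (build (acts u l) v) (build (acts u l) v')" using v l by auto
  have "eqv (build l (u @ v)) (MComp (build (acts u l) v) (build l u))" by (rule build_append)
  also have "eqv \<dots> (MComp (build (acts u l) v') (build l u'))"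
    by (rule eqv_comp[OF uu vv]) simp
  also have "eqv \<dots> (build l (u' @ v'))"
    using build_append[of l u' v'] a by (simp add: eqv_sym)
  finally show "eqv (build l (u @ v)) (build l (u' @ v'))" .
qed

lemma weq_ctx: "weq TYPE('j) n u v \<Longrightarrow> weq TYPE('j) n (p @ u @ q) (p @ v @ q)"
  by (intro weq_app weq_refl)

lemma weq_Suc: "weq TYPE('j) n u v \<Longrightarrow> weq TYPE('j) (Suc n) (map Suc u) (map Suc v)"
  unfolding weq_def
proof (intro allI impI)
  fix l :: "'j list"
  assume h: "\<forall>(l::'j list). length l = n \<longrightarrow> eqv (build l u) (build l v)"
    and l: "length l = Suc n"
  then obtain x r where xr: "l = x # r" "length r = n" by (cases l) auto
  have "eqv (build (x # r) (map Suc u)) (MCons x (build r u))" by (rule build_Suc)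
  also have "eqv \<dots> (MCons x (build r v))" using h xr by (simp add: eqv_cons)
  also have "eqv \<dots> (build (x # r) (map Suc v))" by (rule eqv_sym, rule build_Suc)
  finally show "eqv (build l (map Suc u)) (build l (map Suc v))" using xr by simp
qed



lemma sw_at_invalid: "length l \<le> Suc i \<Longrightarrow> eqv (sw_at i l) (MId l) \<and> swl i l = l"
proof (induction i l rule: sw_at.induct)
  case (2 k x r)
  then have "eqv (sw_at k r) (MId r) \<and> swl k r = r" by simp
  then show ?case using eqv_cons eqv_cons_id eqv_trans by fastforce
qed (auto simp: eqv_refl)

lemma weq_invalid: "n \<le> Suc i \<Longrightarrow> weq TYPE('j) n [i] []"
  unfolding weq_def
proof (intro allI impI)
  fix l :: "'j list"
  assume "n \<le> Suc i" "length l = n"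
  then have h: "eqv (sw_at i l) (MId l) \<and> swl i l = l" using sw_at_invalid[of l i] by simp
  have "eqv (build l [i]) (sw_at i l)" using h by (simp add: eqv_idl)
  also have "eqv \<dots> (MId l)" using h by simp
  finally show "eqv (build l [i]) (build l [])" by simp
qed

lemma weq_00: "weq TYPE('j) n [0, 0] []"
proof (cases "n \<le> 1")
  case True
  then have "weq TYPE('j) n ([0] @ [0]) ([] @ [])" by (intro weq_app weq_invalid) auto
  then show ?thesis by simp
next
  case False
  show ?thesis unfolding weq_def
  proof (intro allI impI)
    fix l :: "'j list"
    assume "length l = n"
    with False obtain a b r where l: "l = a # b # r"
      by (cases l; cases "tl l") auto
    have "eqv (build l [0, 0]) (MComp (MSw b a r) (MSw a b r))"
      using l by (simp add: eqv_compL eqv_idl)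
    also have "eqv \<dots> (MId l)" using l by (simp add: eqv_inv)
    finally show "eqv (build l [0, 0]) (build l [])" by simp
  qed
qed

lemma weq_far: "weq TYPE('j) n [0, Suc (Suc k)] [Suc (Suc k), 0]"
proof (cases "n \<le> 1")
  case True
  then have "weq TYPE('j) n ([0] @ [Suc (Suc k)]) ([] @ [])" by (intro weq_app weq_invalid) auto
  moreover have "weq TYPE('j) n ([Suc (Suc k)] @ [0]) ([] @ [])" using True by (intro weq_app weq_invalid) auto
  ultimately show ?thesis using weq_sym weq_trans by fastforce
next
  case False
  show ?thesis unfolding weq_def
  proof (intro allI impI)
    fix l :: "'j list"
    assume "length l = n"
    with False obtain a b r where l: "l = a # b # r"
      by (cases l; cases "tl l") auto
    have "eqv (build l [0, Suc (Suc k)]) (MComp (MCons b (MCons a (sw_at k r))) (MSw a b (src (sw_at k r))))"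
      using l by (simp add: eqv_compL eqv_idl)
    also have "eqv \<dots> (MComp (MSw a b (tgt (sw_at k r))) (MCons a (MCons b (sw_at k r))))"
      by (rule eqv_nat) simp
    also have "eqv \<dots> (build l [Suc (Suc k), 0])"
      by (rule eqv_sym) (simp add: l eqv_compL eqv_idl)
    finally show "eqv (build l [0, Suc (Suc k)]) (build l [Suc (Suc k), 0])" .
  qed
qed

lemma weq_braid: "3 \<le> n \<Longrightarrow> weq TYPE('j) n [0, 1, 0] [1, 0, 1]"
  unfolding weq_def
proof (intro allI impI)
  fix l :: "'j list"
  assume "3 \<le> n" "length l = n"
  then obtain a b c r where l: "l = a # b # c # r"
    by (cases l; cases "tl l"; cases "tl (tl l)") auto
  have "eqv (build l [0, 1, 0])
     (MComp (MComp (MSw b c (a # r)) (MCons b (MSw a c r))) (MSw a b (c # r)))"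
    using l by (simp add: eqv_compL eqv_idl numeral_eq_Suc)
  also have "eqv \<dots> (MComp (MSw b c (a # r)) (MComp (MCons b (MSw a c r)) (MSw a b (c # r))))"
    by (rule eqv_sym, rule eqv_assoc) auto
  also have "eqv \<dots> (MComp (MCons c (MSw a b r)) (MComp (MSw a c (b # r)) (MCons a (MSw b c r))))"
    by (rule eqv_ybe)
  also have "eqv \<dots> (MComp (MComp (MCons c (MSw a b r)) (MSw a c (b # r))) (MCons a (MSw b c r)))"
    by (rule eqv_assoc) auto
  also have "eqv \<dots> (build l [1, 0, 1])"
    by (rule eqv_sym) (simp add: l eqv_compL eqv_idl numeral_eq_Suc)
  finally show "eqv (build l [0, 1, 0]) (build l [1, 0, 1])" .
qed

lemma weq_comm0: "weq TYPE('j) n (0 # map Suc (map Suc w)) (map Suc (map Suc w) @ [0])"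
proof (induction w)
  case Nil
  then show ?case by (simp add: weq_refl)
next
  case (Cons k w)
  have "weq TYPE('j) n ([] @ [0, Suc (Suc k)] @ map Suc (map Suc w)) ([] @ [Suc (Suc k), 0] @ map Suc (map Suc w))"
    by (rule weq_ctx, rule weq_far)
  also have "weq TYPE('j) n \<dots> ([Suc (Suc k)] @ (map Suc (map Suc w) @ [0]) @ [])"
    using weq_ctx[OF Cons.IH, of "[Suc (Suc k)]" "[]"] by simp
  finally show ?case by simp
qed

lemma upt0S: "[0..<Suc j] = 0 # map Suc [0..<j]"
  by (simp add: map_Suc_upt upt_conv_Cons del: upt_Suc)

lemma T1: "i \<le> j \<Longrightarrow> j + 2 \<le> n \<Longrightarrow>
  weq TYPE('j) n (0 # map Suc [0..<i] @ [0..<Suc j]) (map Suc [0..<j] @ [0..<i])"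
proof (induction i arbitrary: j n)
  case 0
  have "weq TYPE('j) n ([] @ [0, 0] @ map Suc [0..<j]) ([] @ [] @ map Suc [0..<j])"
    by (rule weq_ctx, rule weq_00)
  then show ?case by (simp add: upt0S del: upt_Suc)
next
  case (Suc i')
  then obtain j' n' where jn: "j = Suc j'" "n = Suc n'" "i' \<le> j'" "j' + 2 \<le> n'"
    by (cases j; cases n) auto
  define P where "P = map Suc (map Suc [0..<i'])"
  define Q where "Q = map Suc (map Suc [0..<j'])"
  have L: "0 # map Suc [0..<Suc i'] @ [0..<Suc j] = [0, 1] @ (P @ [0]) @ (1 # Q)"
    unfolding P_def Q_def jn by (simp add: upt0S del: upt_Suc)
  have R: "map Suc [0..<j] @ [0..<Suc i'] = [1] @ (Q @ [0]) @ map Suc [0..<i']"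
    unfolding P_def Q_def jn by (simp add: upt0S del: upt_Suc)
  have "weq TYPE('j) n ([0, 1] @ (P @ [0]) @ (1 # Q)) ([0, 1] @ (0 # P) @ (1 # Q))"
    unfolding P_def by (rule weq_ctx, rule weq_sym, rule weq_comm0)
  also have "weq TYPE('j) n \<dots> ([] @ [0, 1, 0] @ (P @ 1 # Q))" by (simp add: weq_refl)
  also have "weq TYPE('j) n \<dots> ([] @ [1, 0, 1] @ (P @ 1 # Q))"
    using jn by (intro weq_ctx weq_braid) simp
  also have "weq TYPE('j) n \<dots> ([1, 0] @ map Suc (0 # map Suc [0..<i'] @ [0..<Suc j']) @ [])"
    unfolding P_def Q_def by (simp add: upt0S weq_refl del: upt_Suc)
  also have "weq TYPE('j) n \<dots> ([1, 0] @ map Suc (map Suc [0..<j'] @ [0..<i']) @ [])"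
  proof (rule weq_ctx)
    have "weq TYPE('j) n' (0 # map Suc [0..<i'] @ [0..<Suc j']) (map Suc [0..<j'] @ [0..<i'])"
      using Suc.IH[of j' n'] jn by simp
    then show "weq TYPE('j) n (map Suc (0 # map Suc [0..<i'] @ [0..<Suc j'])) (map Suc (map Suc [0..<j'] @ [0..<i']))"
      unfolding jn by (rule weq_Suc)
  qed
  also have "weq TYPE('j) n \<dots> ([1] @ (0 # Q) @ map Suc [0..<i'])"
    unfolding Q_def by (simp add: weq_refl)
  also have "weq TYPE('j) n \<dots> ([1] @ (Q @ [0]) @ map Suc [0..<i'])"
    unfolding Q_def by (rule weq_ctx, rule weq_comm0)
  finally show ?case using L R by simp
qed

fun idx :: "'a \<Rightarrow> 'a list \<Rightarrow> nat" where
  "idx x [] = 0"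
| "idx x (y # ys) = (if x = y then 0 else Suc (idx x ys))"

definition ia :: "nat \<Rightarrow> 'a \<Rightarrow> 'a list \<Rightarrow> 'a list" where
  "ia k x ys = take k ys @ x # drop k ys"

fun cw :: "'a list \<Rightarrow> 'a list \<Rightarrow> nat list" where
  "cw [] m = []"
| "cw (x # r) m = map Suc (cw r (remove1 x m)) @ [0..<idx x m]"

lemma idx_append: "x \<notin> set A \<Longrightarrow> idx x (A @ B) = length A + idx x B"
  by (induction A) auto

lemma ia_facts: "x \<notin> set ys \<Longrightarrow> k \<le> length ys \<Longrightarrow> idx x (ia k x ys) = k \<and> remove1 x (ia k x ys) = ys"
proof -
  assume a: "x \<notin> set ys" "k \<le> length ys"
  have "x \<notin> set (take k ys)" using a in_set_takeD by fastforce
  then show ?thesis using a unfolding ia_def by (simp add: idx_append remove1_append)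
qed

lemma ia_set[simp]: "set (ia k x ys) = insert x (set ys)"
  unfolding ia_def by (metis Un_insert_right append_take_drop_id list.simps(15) set_append)

lemma ia_len[simp]: "length (ia k x ys) = Suc (length ys)"
  unfolding ia_def by simp

lemma ia_mset[simp]: "mset (ia k x ys) = add_mset x (mset ys)"
  unfolding ia_def by (metis append_take_drop_id mset_append union_mset_add_mset_right mset.simps(2))

lemma ia_app: "k = length A + k' \<Longrightarrow> k' \<le> length B \<Longrightarrow> ia k x (A @ B) = A @ ia k' x B"
  unfolding ia_def by simp

lemma ia_swap: "i \<le> j \<Longrightarrow> j \<le> length R \<Longrightarrow> ia i x (ia j y R) = ia (Suc j) y (ia i x R)"
proof -
  assume h: "i \<le> j" "j \<le> length R"
  define A where "A = take i R"
  define B where "B = take (j - i) (drop i R)"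
  define C where "C = drop j R"
  have R: "R = A @ B @ C" unfolding A_def B_def C_def using h
    by (metis append.assoc append_take_drop_id drop_drop le_add_diff_inverse2 take_add)
  have lA: "length A = i" and lB: "length B = j - i" using h unfolding A_def B_def by auto
  have 1: "ia j y R = A @ B @ y # C"
    unfolding R using ia_app[of j "A @ B" 0 C] lA lB h by (simp add: ia_def)
  have 2: "ia i x R = A @ x # B @ C"
    unfolding R using ia_app[of i A 0 "B @ C"] lA by (simp add: ia_def)
  have 3: "ia i x (A @ B @ y # C) = A @ x # B @ y # C"
    using ia_app[of i A 0 "B @ y # C"] lA by (simp add: ia_def)
  have 4: "ia (Suc j) y (A @ x # B @ C) = A @ x # B @ y # C"
    using ia_app[of "Suc j" "A @ x # B" 0 C] lA lB h by (simp add: ia_def)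
  show ?thesis using 1 2 3 4 by simp
qed

lemma cw_pair:
  assumes "x \<noteq> y" "x \<notin> set R" "y \<notin> set R" "i \<le> j" "j \<le> length R"
  shows "cw (x # y # w) (ia i x (ia j y R)) = map Suc (map Suc (cw w R) @ [0..<j]) @ [0..<i]"
    and "cw (y # x # w) (ia i x (ia j y R)) = map Suc (map Suc (cw w R) @ [0..<i]) @ [0..<Suc j]"
proof -
  have f1: "idx x (ia i x (ia j y R)) = i \<and> remove1 x (ia i x (ia j y R)) = ia j y R"
    using assms by (intro ia_facts) auto
  have f2: "idx y (ia j y R) = j \<and> remove1 y (ia j y R) = R"
    using assms by (intro ia_facts) auto
  show "cw (x # y # w) (ia i x (ia j y R)) = map Suc (map Suc (cw w R) @ [0..<j]) @ [0..<i]"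
    using f1 f2 by simp
  have e: "ia i x (ia j y R) = ia (Suc j) y (ia i x R)" using assms by (simp add: ia_swap)
  have f3: "idx y (ia (Suc j) y (ia i x R)) = Suc j \<and> remove1 y (ia (Suc j) y (ia i x R)) = ia i x R"
    using assms by (intro ia_facts) auto
  have f4: "idx x (ia i x R) = i \<and> remove1 x (ia i x R) = R"
    using assms by (intro ia_facts) auto
  show "cw (y # x # w) (ia i x (ia j y R)) = map Suc (map Suc (cw w R) @ [0..<i]) @ [0..<Suc j]"
    unfolding e using f3 f4 by simp
qed

lemma decomp_aux:
  assumes "distinct L" "L = xs @ p # us @ q # vs"
  shows "\<exists>R i j. i \<le> j \<and> j \<le> length R \<and> p \<notin> set R \<and> q \<notin> set R \<and> L = ia i p (ia j q R)"
proof (intro exI conjI)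
  let ?R = "xs @ us @ vs"
  show "length xs \<le> length xs + length us" by simp
  show "length xs + length us \<le> length ?R" by simp
  show "p \<notin> set ?R" "q \<notin> set ?R" using assms by auto
  have "ia (length xs + length us) q ?R = xs @ us @ q # vs"
    using ia_app[of _ "xs @ us" 0 vs] by (simp add: ia_def)
  moreover have "ia (length xs) p (xs @ us @ q # vs) = xs @ p # us @ q # vs"
    using ia_app[of _ xs 0 "us @ q # vs"] by (simp add: ia_def)
  ultimately show "L = ia (length xs) p (ia (length xs + length us) q ?R)" using assms by simp
qed

lemma decomp:
  assumes "distinct L" "a \<in> set L" "b \<in> set L" "a \<noteq> b"
  shows "\<exists>R i j. i \<le> j \<and> j \<le> length R \<and> a \<notin> set R \<and> b \<notin> set R \<and>
     (L = ia i a (ia j b R) \<or> L = ia i b (ia j a R))"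
proof -
  obtain xs ys where L: "L = xs @ a # ys" using assms split_list by metis
  show ?thesis
  proof (cases "b \<in> set ys")
    case True
    then obtain us vs where "ys = us @ b # vs" using split_list by metis
    then show ?thesis using decomp_aux[of L xs a us b vs] assms L by auto
  next
    case False
    then have "b \<in> set xs" using assms L by auto
    then obtain us vs where "xs = us @ b # vs" using split_list by metis
    then show ?thesis using decomp_aux[of L us b vs a ys] assms L by auto
  qed
qed

lemma key_invalid: "length l \<le> Suc i \<Longrightarrow> weq TYPE('j) (length l) (i # w) w"
  using weq_ctx[OF weq_invalid[of "length l" i], of "[]" w] by simp

lemma key:
  fixes l :: "'a list"
  shows "distinct l \<Longrightarrow> mset m = mset l \<Longrightarrow> weq TYPE('j) (length l) (i # cw (swl i l) m) (cw l m)"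
proof (induction i l arbitrary: m rule: swl.induct)
  case (1 a b w)
  let ?n = "length (a # b # w)"
  have dm: "distinct m" using 1 mset_eq_imp_distinct_iff by metis
  have sm: "set m = set (a # b # w)" using 1(2) mset_eq_setD by metis
  have ab: "a \<in> set m" "b \<in> set m" "a \<noteq> b" using 1 sm by auto
  obtain R i j where Rij: "i \<le> j" "j \<le> length R" "a \<notin> set R" "b \<notin> set R"
     "m = ia i a (ia j b R) \<or> m = ia i b (ia j a R)"
    using decomp[OF dm ab] by blast
  have lR: "?n = length R + 2" using Rij(5) 1(2) by (metis ia_len add_2_eq_Suc' size_mset)
  have T: "weq TYPE('j) ?n (0 # map Suc [0..<i] @ [0..<Suc j]) (map Suc [0..<j] @ [0..<i])"
    using Rij lR by (intro T1) auto
  define C where "C = cw w R"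
  define D where "D = map Suc (map Suc C)"
  show ?case using Rij(5)
  proof
    assume m: "m = ia i a (ia j b R)"
    have e1: "cw (a # b # w) m = D @ map Suc [0..<j] @ [0..<i]"
      unfolding m D_def C_def using cw_pair(1)[OF ab(3) Rij(3,4,1,2)] by simp
    have e2: "cw (b # a # w) m = D @ map Suc [0..<i] @ [0..<Suc j]"
      unfolding m D_def C_def using cw_pair(2)[OF ab(3) Rij(3,4,1,2)] by (simp del: upt_Suc)
    have "weq TYPE('j) ?n ([] @ (0 # D) @ (map Suc [0..<i] @ [0..<Suc j]))
                         ([] @ (D @ [0]) @ (map Suc [0..<i] @ [0..<Suc j]))"
      unfolding D_def by (rule weq_ctx, rule weq_comm0)
    also have "weq TYPE('j) ?n \<dots> (D @ (map Suc [0..<j] @ [0..<i]) @ [])"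
      using weq_ctx[OF T, of D "[]"] by simp
    finally show ?thesis using e1 e2 by (simp del: upt_Suc)
  next
    assume m: "m = ia i b (ia j a R)"
    have e1: "cw (b # a # w) m = D @ map Suc [0..<j] @ [0..<i]"
      unfolding m D_def C_def using cw_pair(1)[OF ab(3)[symmetric] Rij(4,3,1,2)] by simp
    have e2: "cw (a # b # w) m = D @ map Suc [0..<i] @ [0..<Suc j]"
      unfolding m D_def C_def using cw_pair(2)[OF ab(3)[symmetric] Rij(4,3,1,2)] by (simp del: upt_Suc)
    have "weq TYPE('j) ?n ([] @ (0 # D) @ (map Suc [0..<j] @ [0..<i]))
                         ([] @ (D @ [0]) @ (map Suc [0..<j] @ [0..<i]))"
      unfolding D_def by (rule weq_ctx, rule weq_comm0)
    also have "weq TYPE('j) ?n \<dots> ((D @ [0]) @ (0 # map Suc [0..<i] @ [0..<Suc j]) @ [])"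
      using weq_ctx[OF weq_sym[OF T], of "D @ [0]" "[]"] by simp
    also have "weq TYPE('j) ?n \<dots> (D @ [0, 0] @ (map Suc [0..<i] @ [0..<Suc j]))" by (simp add: weq_refl)
    also have "weq TYPE('j) ?n \<dots> (D @ [] @ (map Suc [0..<i] @ [0..<Suc j]))"
      by (rule weq_ctx, rule weq_00)
    finally show ?thesis using e1 e2 by (simp del: upt_Suc)
  qed
next
  case (2 k x r)
  let ?M = "remove1 x m"
  have IH: "weq TYPE('j) (length r) (k # cw (swl k r) ?M) (cw r ?M)"
    using 2 by (intro 2(1)) auto
  have "weq TYPE('j) (length (x # r)) (map Suc (k # cw (swl k r) ?M) @ [0..<idx x m])
     (map Suc (cw r ?M) @ [0..<idx x m])"
    using weq_app[OF weq_Suc[OF IH] weq_refl] by simp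
  then show ?case by simp
qed (simp_all add: key_invalid weq_invalid)

lemma cw_self: "weq TYPE('j) (length l) (cw l l) []"
proof (induction l)
  case Nil
  then show ?case by (simp add: weq_refl)
next
  case (Cons x r)
  then show ?case using weq_Suc[OF Cons] by simp
qed

lemma main_word: "distinct l \<Longrightarrow> weq TYPE('j) (length l) u (cw l (acts u l))"
proof (induction u arbitrary: l)
  case Nil
  then show ?case by (simp add: weq_sym cw_self)
next
  case (Cons i u)
  have d: "distinct (swl i l)" using Cons.prems mset_eq_imp_distinct_iff swl_mset by metis
  have "weq TYPE('j) (length l) ([i] @ u @ []) ([i] @ cw (swl i l) (acts u (swl i l)) @ [])"
    using weq_ctx[OF Cons.IH[OF d], of "[i]" "[]"] by simp
  also have "weq TYPE('j) (length l) \<dots> (cw l (acts u (swl i l)))"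
    using key[OF Cons.prems, of "acts u (swl i l)" i] by simp
  finally show ?case by simp
qed

lemma coherence:
  fixes f g :: "'j mexp"
  assumes "mtyped f L1 L2" "mtyped g L1 L2" "distinct L1"
  shows "meq L1 L2 f g"
proof -
  have tf: "wt f" "src f = L1" "tgt f = L2" and tg: "wt g" "src g = L1" "tgt g = L2"
    using assms typed_iff by metis+
  have ef: "eqv f (build L1 (nf f))" using nf_eqv tf by metis
  have eg: "eqv g (build L1 (nf g))" using nf_eqv tg by metis
  have af: "acts (nf f) L1 = L2" using eqv_D[OF ef] tf by simp
  have ag: "acts (nf g) L1 = L2" using eqv_D[OF eg] tg by simp
  have wf: "eqv (build L1 (nf f)) (build L1 (cw L1 L2))"
    using main_word[OF assms(3), of "nf f"] af unfolding weq_def by auto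
  have wg: "eqv (build L1 (nf g)) (build L1 (cw L1 L2))"
    using main_word[OF assms(3), of "nf g"] ag unfolding weq_def by auto
  have "eqv f g" using ef wf wg eg by (meson eqv_sym eqv_trans)
  then show ?thesis using tf by (simp add: eqv_meq)
qed

theorem lemma4p11:
  fixes J :: "'j set" and L1 L2 :: "'j list"
  assumes "set L1 \<subseteq> J" and "set L2 \<subseteq> J"
  shows "((\<exists>f. mtyped f L1 L2) \<longrightarrow> (linear_slist L2 \<longleftrightarrow> linear_slist L1))
       \<and> ((linear_slist L1 \<or> linear_slist L2) \<longrightarrow>
            (\<forall>f g. mtyped f L1 L2 \<longrightarrow> mtyped g L1 L2 \<longrightarrow> meq L1 L2 f g))"
proof (intro conjI impI allI)
  assume "\<exists>f. mtyped f L1 L2"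
  then have "mset L1 = mset L2" using mtyped_mset by blast
  then show "linear_slist L2 \<longleftrightarrow> linear_slist L1"
    unfolding linear_slist_def using mset_eq_imp_distinct_iff by metis
next
  fix f g
  assume lin: "linear_slist L1 \<or> linear_slist L2" and f: "mtyped f L1 L2" and g: "mtyped g L1 L2"
  have "mset L1 = mset L2" using mtyped_mset f by blast
  then have "distinct L1" using lin unfolding linear_slist_def using mset_eq_imp_distinct_iff by metis
  then show "meq L1 L2 f g" using coherence f g by blast
qed

end
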